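(* Under the standing assumptions below: (i) if $f\in S_2$ then $\theta(f)$ is invertible with $\|\theta(f)^{-1}\|_{HS}<1.5$, and if $e\in S_0$ then $I-\theta(e)$ is invertible with $\|(I-\theta(e))^{-1}\|_{HS}<1.5$; (ii) if $e,f\in S_2$ then $ef\in S_2$; (iii) if $e\in S_0$ and $f\in S$ then $ef\in S_0$. In particular $S_2\cup S_0$ is a subsemigroup of $S$, and the map $\phi:S_2\cup S_0\to M_2(\mathbb C)$ with $\phi\equiv I$ on $S_2$ and $\phi\equiv0$ on $S_0$ is multiplicative.
   Context: Standing assumptions: $S$ is a semilattice (commutative semigroup of idempotents), $0\le\delta<0.03$, and $\theta:S\to M_2(\mathbb C)$ satisfies $\|\theta(e)\theta(f)-\theta(ef)\|_{HS}\le\delta$ for all $e,f\in S$, where $\|A\|_{HS}=(\operatorname{tr}(A^*A))^{1/2}$. For $k\in\{0,1,2\}$, $S_k=\{x\in S:\ |\operatorname{tr}\theta(x)-k|<0.95\}$; these sets are pairwise disjoint and cover $S$. *)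

theory Defs
  imports "HOL-Analysis.Analysis"
begin

definition hs_norm :: "complex^2^2 \<Rightarrow> real" where
  "hs_norm A = sqrt (\<Sum>i\<in>UNIV. \<Sum>j\<in>UNIV. (cmod (A $ i $ j))\<^sup>2)"

definition mtrace :: "complex^2^2 \<Rightarrow> complex" where
  "mtrace A = (\<Sum>i\<in>UNIV. A $ i $ i)"

definition Sk :: "('a \<Rightarrow> complex^2^2) \<Rightarrow> nat \<Rightarrow> 'a set" where
  "Sk \<theta> k = {x. cmod (mtrace (\<theta> x) - of_nat k) < 0.95}"

end

theory Submission
  imports Defs
begin


lemma para: "cmod (x::complex)^2 + cmod y^2 = (cmod (x+y)^2 + cmod (x-y)^2)/2"
  unfolding cmod_power2 by (simp add: power2_eq_square algebra_simps)

lemma aux1: "(e::real) + 4*x*y \<le> 2*(e/2 + x^2 + y^2)"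
proof -
  have "0 \<le> (x-y)^2" by simp
  thus ?thesis by (simp add: power2_diff algebra_simps)
qed

lemma real_step:
  fixes p S L W :: real
  assumes "0 \<le> p" "p < (19/20)" "p*(2-p) \<le> 2*S + L" "S*S + W*W*L < (9/5000)"
    "1 - p \<le> W" "0 \<le> S" "0 \<le> L"
  shows "p < (9/200)"
proof (rule ccontr)
  assume "\<not> p < (9/200)"
  hence p: "p \<ge> (9/200)" by simp
  have S: "S < (17/400)"
  proof (rule ccontr)
    assume "\<not> S < (17/400)" hence h: "S*S \<ge> (17/400)*(17/400)" by (intro mult_mono) auto
    have "W*W*L \<ge> 0" using assms by simp
    thus False using assms(4) h by linarith
  qed
  have W2: "W*W \<ge> (1-p)*(1-p)" using assms by (intro mult_mono) auto
  define q where "q = (1-p)*(1-p)"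
  have q1: "q \<ge> (1/20)*(1/20)" unfolding q_def using assms by (intro mult_mono) auto
  have q2: "q \<le> (191/200)*(191/200)" unfolding q_def using assms p by (intro mult_mono) auto
  have pq: "p*(2-p) = 1 - q" unfolding q_def by (simp add: algebra_simps)
  have L: "L \<ge> 1 - q - (17/200)" using assms S pq by linarith
  have "q*L \<le> W*W*L" using W2 q_def assms by (simp add: mult_right_mono)
  hence "q*L < (9/5000)" using assms by (smt (verit) zero_le_square)
  moreover have "q*L \<ge> q*((183/200) - q)" using L q1 by (intro mult_left_mono) auto
  hence "q*L \<ge> (183/200)*q - q*q" by (simp add: algebra_simps)
  moreover have "0 \<le> (36581/40000)*q - q*q - 36481/16000000"
  proof -
    have "(q - (1/400))*((36481/40000) - q) \<ge> 0" using q1 q2 by simp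
    moreover have "(q - (1/400))*((36481/40000) - q) = (36581/40000)*q - q*q - 36481/16000000" by (simp add: field_simps)
    ultimately show ?thesis by simp
  qed
  ultimately show False using q1 by linarith
qed



lemma core_scalar:
  fixes a b c d :: complex
  assumes N: "cmod(a*a+b*c-a)^2 + cmod(a*b+b*d-b)^2 + cmod(c*a+d*c-c)^2 + cmod(c*b+d*d-d)^2 < 9/10000"
    and T: "cmod(a+d-2) < 19/20"
  shows "a*d-b*c \<noteq> 0 \<and> cmod a^2+cmod b^2+cmod c^2+cmod d^2 < 9/4 * cmod(a*d-b*c)^2
     \<and> cmod(a-1)^2+cmod b^2+cmod c^2+cmod(d-1)^2 < 1/400"
proof -
  define w where "w = a+d-1"
  define u where "u = a+d-2"
  define s where "s = (a*a+b*c-a) + (c*b+d*d-d)"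
  define \<Delta> where "\<Delta> = (a-d)^2 + 4*b*c"
  define K where "K = cmod(a-d)^2/2 + cmod b^2 + cmod c^2"
  define NN where "NN = cmod(a*a+b*c-a)^2 + cmod(a*b+b*d-b)^2 + cmod(c*a+d*c-c)^2 + cmod(c*b+d*d-d)^2"
  have e1: "(a*a+b*c-a) - (c*b+d*d-d) = w*(a-d)" unfolding w_def by algebra
  have e2: "a*b+b*d-b = w*b" unfolding w_def by algebra
  have e3: "c*a+d*c-c = w*c" unfolding w_def by algebra
  have NNe: "NN = cmod s^2/2 + cmod w^2 * K"
  proof -
    have "cmod(a*a+b*c-a)^2 + cmod(c*b+d*d-d)^2 = (cmod s^2 + cmod(w*(a-d))^2)/2"
      unfolding s_def e1[symmetric] by (rule para)
    hence "cmod(a*a+b*c-a)^2 + cmod(c*b+d*d-d)^2 = (cmod s^2 + cmod w^2 * cmod(a-d)^2)/2"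
      by (simp add: norm_mult power_mult_distrib)
    thus ?thesis unfolding NN_def K_def e2 e3 by (simp add: norm_mult power_mult_distrib ring_distribs)
  qed
  have K0: "K \<ge> 0" unfolding K_def by simp
  have LK: "cmod \<Delta> \<le> 2*K"
  proof -
    have "cmod \<Delta> \<le> cmod((a-d)^2) + cmod(4*b*c)" unfolding \<Delta>_def by (rule norm_triangle_ineq)
    also have "\<dots> = cmod(a-d)^2 + 4*cmod b*cmod c" by (simp add: norm_mult norm_power)
    also have "\<dots> \<le> 2*K" unfolding K_def by (rule aux1)
    finally show ?thesis .
  qed
  have sid: "u*(u+2) = 2 * s - \<Delta>" unfolding u_def s_def \<Delta>_def by algebra
  define p where "p = cmod u"
  define S where "S = cmod s"
  define L where "L = cmod \<Delta>"
  define W where "W = cmod w"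
  have p0: "0 \<le> p" unfolding p_def by simp
  have pT: "p < 19/20" using T unfolding p_def u_def .
  have u2: "cmod (u+2) \<ge> 2 - p"
    using norm_triangle_ineq4[of "u+2" u] unfolding p_def by simp
  have Wp: "1 - p \<le> W"
    using norm_triangle_ineq4[of "w" u] unfolding p_def W_def by (simp add: w_def u_def)
  have "p*(2-p) \<le> p * cmod(u+2)" using u2 p0 by (intro mult_left_mono) auto
  also have "\<dots> = cmod (2 * s - \<Delta>)" unfolding p_def sid[symmetric] by (simp add: norm_mult)
  also have "\<dots> \<le> 2*S + L" unfolding S_def L_def using norm_triangle_ineq4[of "2 * s" \<Delta>]
    by (simp add: norm_mult)
  finally have pSL: "p*(2-p) \<le> 2*S + L" .
  have NNlt: "NN < 9/10000" using N unfolding NN_def .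
  have WL: "W*W*L \<le> W*W*(2*K)" unfolding L_def using LK by (intro mult_left_mono) auto
  have "S*S + W*W*L < 9/5000" using NNe NNlt WL unfolding S_def W_def
    by (simp add: power2_eq_square)
  hence psmall: "p < 9/200"
    by (rule real_step[OF p0 pT pSL _ Wp]) (auto simp: S_def L_def)
  have W1: "W \<ge> 191/200" using Wp psmall by linarith
  have WW: "W*W \<ge> (191/200)*(191/200)" using W1 by (intro mult_mono) auto
  have "K*((191/200)*(191/200)) \<le> K*(W*W)" using WW K0 by (intro mult_left_mono) auto
  moreover have "K*(W*W) < 9/10000"
  proof -
    have "cmod w^2 * K = K*(W*W)" unfolding W_def by (simp add: power2_eq_square)
    moreover have "cmod s^2/2 \<ge> 0" by simp
    ultimately show ?thesis using NNe NNlt by linarith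
  qed
  ultimately have Ksm: "K < 1/1000" by linarith
  have Lsm: "L < 1/500" using LK Ksm unfolding L_def by linarith
  define v where "v = (a+d)/2"
  have v1: "cmod (v - 1) = p/2" unfolding v_def p_def u_def
    by (simp add: field_simps norm_divide)
  have vlow: "cmod v \<ge> 391/400" using norm_triangle_ineq4[of v "v-1"] v1 psmall by simp
  define X where "X = cmod v ^2"
  have X1: "X \<ge> (391/400)*(391/400)" unfolding X_def power2_eq_square using vlow
    by (intro mult_mono) auto
  have Did: "a*d - b*c = v^2 - \<Delta>/4" unfolding v_def \<Delta>_def by (simp add: field_simps power2_eq_square)
  have Dlow: "cmod (a*d-b*c) \<ge> X - 1/2000"
  proof -
    have "cmod (v^2) \<le> cmod (a*d-b*c) + cmod (\<Delta>/4)" unfolding Did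
      using norm_triangle_ineq2[of "v^2" "\<Delta>/4"] by simp
    thus ?thesis unfolding X_def using Lsm unfolding L_def by (simp add: norm_power norm_divide)
  qed
  have Anorm: "cmod a^2+cmod b^2+cmod c^2+cmod d^2 = 2*X + K"
  proof -
    have "cmod a^2 + cmod d^2 = (cmod (a+d)^2 + cmod (a-d)^2)/2" by (rule para)
    moreover have "cmod (a+d) = 2 * cmod v" unfolding v_def by (simp add: norm_divide)
    ultimately show ?thesis unfolding X_def K_def by (simp add: power2_eq_square)
  qed
  define Y where "Y = X - 1/2000"
  have Y1: "Y \<ge> 191/200" unfolding Y_def using X1 by linarith
  have YY: "Y*Y \<ge> (191/200)*Y" using Y1 by (intro mult_right_mono) auto
  have DY: "cmod (a*d-b*c)^2 \<ge> Y*Y" unfolding power2_eq_square using Dlow Y1 unfolding Y_def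
    by (intro mult_mono) auto
  have D0: "a*d-b*c \<noteq> 0" using Dlow Y1 unfolding Y_def by auto
  have A2: "cmod a^2+cmod b^2+cmod c^2+cmod d^2 < 9/4 * cmod(a*d-b*c)^2"
  proof -
    have "X = Y + 1/2000" unfolding Y_def by simp
    thus ?thesis using Anorm DY YY Y1 Ksm by linarith
  qed
  have A3: "cmod(a-1)^2+cmod b^2+cmod c^2+cmod(d-1)^2 < 1/400"
  proof -
    have "cmod (a-1)^2 + cmod (d-1)^2 = (cmod ((a-1)+(d-1))^2 + cmod ((a-1)-(d-1))^2)/2" by (rule para)
    moreover have "(a-1)+(d-1) = u" "(a-1)-(d-1) = a-d" unfolding u_def by simp_all
    moreover have "p*p \<le> (9/200)*(9/200)" using psmall p0 by (intro mult_mono) auto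
    ultimately show ?thesis using Ksm unfolding K_def p_def by (simp add: power2_eq_square)
  qed
  show ?thesis using D0 A2 A3 by blast
qed



type_synonym cm = "complex^2^2"

lemma hs_eq_norm: "hs_norm (A::cm) = norm A"
  unfolding hs_norm_def norm_vec_def L2_set_def
  by (simp add: sum_nonneg)

lemma hs2: "norm (A::cm) = sqrt (cmod(A$1$1)^2 + cmod(A$1$2)^2 + cmod(A$2$1)^2 + cmod(A$2$2)^2)"
  unfolding hs_eq_norm[symmetric] hs_norm_def by (simp add: sum_2)

lemma norm2: "norm (A::cm)^2 = cmod(A$1$1)^2 + cmod(A$1$2)^2 + cmod(A$2$1)^2 + cmod(A$2$2)^2"
  unfolding hs2 by simp

lemma tr2: "mtrace (A::cm) = A$1$1 + A$2$2"
  unfolding mtrace_def by (simp add: sum_2)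

lemma mult2: "((A::cm) ** (B::cm))$i$j = A$i$1*B$1$j + A$i$2*B$2$j"
  by (simp add: matrix_matrix_mult_def sum_2)

lemma one2 [simp]: "(mat 1 :: cm)$1$1 = 1" "(mat 1 :: cm)$2$2 = 1" "(mat 1 :: cm)$1$2 = 0" "(mat 1 :: cm)$2$1 = 0"
  by (simp_all add: mat_def)

lemma entry_le: "cmod ((A::cm)$i$j) \<le> norm A"
proof -
  have "cmod (A$i$j) = sqrt (cmod (A$i$j)^2)" by simp
  also have "\<dots> \<le> norm A" unfolding hs2 using exhaust_2[of i] exhaust_2[of j]
    by (intro real_sqrt_le_mono) auto
  finally show ?thesis .
qed

lemma tr_le: "cmod (mtrace (A::cm)) \<le> 2 * norm A"
  unfolding tr2 using norm_triangle_ineq[of "A$1$1" "A$2$2"] entry_le[of A 1 1] entry_le[of A 2 2]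
  by linarith

lemma cs2: "cmod(x*y+z*w)^2 \<le> (cmod x^2+cmod z^2)*(cmod y^2+cmod w^2)"
proof -
  have "cmod(x*y+z*w) \<le> cmod x*cmod y + cmod z * cmod w"
    using norm_triangle_ineq[of "x*y" "z*w"] by (simp add: norm_mult)
  hence "cmod(x*y+z*w)^2 \<le> (cmod x*cmod y + cmod z * cmod w)^2" by (intro power_mono) auto
  also have "\<dots> \<le> (cmod x^2+cmod z^2)*(cmod y^2+cmod w^2)"
  proof -
    have "0 \<le> (cmod x * cmod w - cmod z * cmod y)^2" by simp
    thus ?thesis by (simp add: power2_eq_square algebra_simps)
  qed
  finally show ?thesis .
qed

lemma norm_mult_le: "norm ((A::cm) ** (B::cm)) \<le> norm A * norm B"
proof -
  have "norm (A ** B)^2 \<le> (norm A * norm B)^2"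
    unfolding power_mult_distrib norm2 mult2
    using cs2[of "A$1$1" "B$1$1" "A$1$2" "B$2$1"] cs2[of "A$1$1" "B$1$2" "A$1$2" "B$2$2"]
      cs2[of "A$2$1" "B$1$1" "A$2$2" "B$2$1"] cs2[of "A$2$1" "B$1$2" "A$2$2" "B$2$2"]
    by (simp add: algebra_simps)
  thus ?thesis by (simp add: power2_le_iff_abs_le)
qed



lemma inv_unique: "(A::cm) ** B = mat 1 \<Longrightarrow> B ** A = mat 1 \<Longrightarrow> invertible A \<and> matrix_inv A = B"
proof -
  assume AB: "A ** B = mat 1" and BA: "B ** A = mat 1"
  hence inv: "invertible A" unfolding invertible_def by blast
  have "A ** matrix_inv A = mat 1 \<and> matrix_inv A ** A = mat 1"
    unfolding matrix_inv_def using inv unfolding invertible_def by (rule someI_ex)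
  hence "matrix_inv A ** A = mat 1" by blast
  have "matrix_inv A = matrix_inv A ** (A ** B)" using AB by simp
  also have "\<dots> = (matrix_inv A ** A) ** B" by (simp add: matrix_mul_assoc)
  also have "\<dots> = B" using \<open>matrix_inv A ** A = mat 1\<close> by simp
  finally show ?thesis using inv by blast
qed

lemma core_mat:
  fixes A :: cm
  assumes "norm (A ** A - A) < 3/100" "cmod (mtrace A - 2) < 19/20"
  shows "invertible A \<and> norm (matrix_inv A) < 3/2 \<and> norm (A - mat 1) < 1/20"
proof -
  define a where "a = A$1$1"
  define b where "b = A$1$2"
  define c where "c = A$2$1"
  define d where "d = A$2$2"
  have "norm (A ** A - A)^2 < (3/100)^2" using assms(1) by (intro power_strict_mono) auto
  hence N: "cmod(a*a+b*c-a)^2 + cmod(a*b+b*d-b)^2 + cmod(c*a+d*c-c)^2 + cmod(c*b+d*d-d)^2 < 9/10000"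
    unfolding norm2 vector_minus_component mult2 a_def b_def c_def d_def by (simp add: power2_eq_square)
  have T: "cmod(a+d-2) < 19/20" using assms(2) unfolding tr2 a_def d_def .
  note cs = core_scalar[OF N T]
  define D where "D = a*d-b*c"
  have D0: "D \<noteq> 0" using cs unfolding D_def by blast
  define B :: cm where "B = (\<chi> i j. if i = 1 then (if j = 1 then d/D else -b/D) else (if j = 1 then -c/D else a/D))"
  have B11: "B$1$1 = d/D" and B12: "B$1$2 = -b/D" and B21: "B$2$1 = -c/D" and B22: "B$2$2 = a/D"
    unfolding B_def by simp_all
  have sq: "a * (a * (d * d)) + b * (b * (c * c)) \<noteq> a * (b * (c * (d * 2)))"
  proof
    assume "a * (a * (d * d)) + b * (b * (c * c)) = a * (b * (c * (d * 2)))"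
    hence "D * D = 0" unfolding D_def by (simp add: algebra_simps) 
    thus False using D0 by simp
  qed
  have AB: "A ** B = mat 1"
    unfolding vec_eq_iff forall_2 mult2 B11 B12 B21 B22
    using D0 by (simp add: a_def[symmetric] b_def[symmetric] c_def[symmetric] d_def[symmetric] D_def field_simps sq)
  have BA: "B ** A = mat 1"
    unfolding vec_eq_iff forall_2 mult2 B11 B12 B21 B22
    using D0 by (simp add: a_def[symmetric] b_def[symmetric] c_def[symmetric] d_def[symmetric] D_def field_simps sq)
  note iu = inv_unique[OF AB BA]
  have "norm B ^2 = (cmod a^2+cmod b^2+cmod c^2+cmod d^2) / cmod D^2"
    unfolding norm2 B11 B12 B21 B22 by (simp add: norm_divide power_divide add_divide_distrib)
  also have "\<dots> < 9/4" using cs D0 unfolding D_def by (simp add: divide_less_eq)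
  finally have "norm B ^2 < (3/2)^2" by (simp add: power2_eq_square)
  hence Bn: "norm B < 3/2" by (rule power_less_imp_less_base) simp
  have "norm (A - mat 1)^2 < (1/20)^2"
    unfolding norm2 using cs by (simp add: a_def b_def c_def d_def power2_eq_square)
  hence "norm (A - mat 1) < 1/20" by (rule power_less_imp_less_base) simp
  thus ?thesis using iu Bn by simp
qed



lemma id1: "(mat 1 - T) ** (mat 1 - T) - (mat 1 - T) = T ** T - (T::cm)"
  unfolding vec_eq_iff forall_2 mult2 vector_minus_component by (simp add: algebra_simps)

lemma id2: "E ** F - mat 1 = (E - mat 1) ** (F - mat 1) + (E - mat 1) + (F - (mat 1::cm))"
  unfolding vec_eq_iff forall_2 mult2 vector_minus_component vector_add_component by (simp add: algebra_simps)

lemma trsub: "mtrace (X - mat 1) = mtrace (X::cm) - 2"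
  unfolding tr2 vector_minus_component by simp

lemma trsub2: "mtrace (mat 1 - X) - 2 = - mtrace (X::cm)"
  unfolding tr2 vector_minus_component by simp

theorem propositionp:
  fixes \<theta> :: "'a::ab_semigroup_mult \<Rightarrow> complex^2^2" and \<delta> :: real
  assumes idem: "\<And>x::'a. x * x = x"
    and delta_nonneg: "0 \<le> \<delta>" and delta_small: "\<delta> < 0.03"
    and approx: "\<And>e f. hs_norm (\<theta> e ** \<theta> f - \<theta> (e * f)) \<le> \<delta>"
    and cover: "Sk \<theta> 0 \<union> Sk \<theta> 1 \<union> Sk \<theta> 2 = UNIV"
  shows "(\<forall>f\<in>Sk \<theta> 2. invertible (\<theta> f) \<and> hs_norm (matrix_inv (\<theta> f)) < 1.5)
    \<and> (\<forall>e\<in>Sk \<theta> 0. invertible (mat 1 - \<theta> e) \<and> hs_norm (matrix_inv (mat 1 - \<theta> e)) < 1.5)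
    \<and> (\<forall>e\<in>Sk \<theta> 2. \<forall>f\<in>Sk \<theta> 2. e * f \<in> Sk \<theta> 2)
    \<and> (\<forall>e\<in>Sk \<theta> 0. \<forall>f. e * f \<in> Sk \<theta> 0)
    \<and> (\<forall>x\<in>Sk \<theta> 2 \<union> Sk \<theta> 0. \<forall>y\<in>Sk \<theta> 2 \<union> Sk \<theta> 0. x * y \<in> Sk \<theta> 2 \<union> Sk \<theta> 0)
    \<and> (let \<phi> = (\<lambda>x. if x \<in> Sk \<theta> 2 then (mat 1 :: complex^2^2) else 0)
       in \<forall>x\<in>Sk \<theta> 2 \<union> Sk \<theta> 0. \<forall>y\<in>Sk \<theta> 2 \<union> Sk \<theta> 0. \<phi> (x * y) = \<phi> x ** \<phi> y)"
proof -
  have d3: "\<delta> < 3/100" using delta_small by simp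
  have S2: "x \<in> Sk \<theta> 2 \<longleftrightarrow> cmod (mtrace (\<theta> x) - 2) < 19/20" for x
    unfolding Sk_def by simp
  have S0: "x \<in> Sk \<theta> 0 \<longleftrightarrow> cmod (mtrace (\<theta> x)) < 19/20" for x
    unfolding Sk_def by simp
  have appr: "norm (\<theta> e ** \<theta> f - \<theta> (e*f)) < 3/100" for e f
    using approx[of e f] d3 unfolding hs_eq_norm by simp
  have P2: "invertible (\<theta> f) \<and> norm (matrix_inv (\<theta> f)) < 3/2 \<and> norm (\<theta> f - mat 1) < 1/20"
    if "f \<in> Sk \<theta> 2" for f
  proof (rule core_mat)
    show "norm (\<theta> f ** \<theta> f - \<theta> f) < 3/100" using appr[of f f] idem[of f] by simp
    show "cmod (mtrace (\<theta> f) - 2) < 19/20" using that S2 by blast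
  qed
  have P0: "invertible (mat 1 - \<theta> e) \<and> norm (matrix_inv (mat 1 - \<theta> e)) < 3/2 \<and> norm (\<theta> e) < 1/20"
    if "e \<in> Sk \<theta> 0" for e
  proof -
    have "invertible (mat 1 - \<theta> e) \<and> norm (matrix_inv (mat 1 - \<theta> e)) < 3/2 \<and> norm ((mat 1 - \<theta> e) - mat 1) < 1/20"
    proof (rule core_mat)
      show "norm ((mat 1 - \<theta> e) ** (mat 1 - \<theta> e) - (mat 1 - \<theta> e)) < 3/100"
        unfolding id1 using appr[of e e] idem[of e] by simp
      show "cmod (mtrace (mat 1 - \<theta> e) - 2) < 19/20" unfolding trsub2 using that S0 by simp
    qed
    thus ?thesis by simp
  qed
  have C2: "e * f \<in> Sk \<theta> 2" if "e \<in> Sk \<theta> 2" "f \<in> Sk \<theta> 2" for e f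
  proof -
    have a: "norm (\<theta> e - mat 1) < 1/20" "norm (\<theta> f - mat 1) < 1/20" using P2 that by blast+
    have "norm ((\<theta> e - mat 1) ** (\<theta> f - mat 1)) \<le> norm (\<theta> e - mat 1) * norm (\<theta> f - mat 1)"
      by (rule norm_mult_le)
    also have "\<dots> \<le> (1/20) * (1/20)" using a by (intro mult_mono) auto
    finally have b: "norm ((\<theta> e - mat 1) ** (\<theta> f - mat 1)) \<le> 1/400" by simp
    have "norm (\<theta> e ** \<theta> f - mat 1) \<le> norm ((\<theta> e - mat 1) ** (\<theta> f - mat 1)) + norm (\<theta> e - mat 1) + norm (\<theta> f - mat 1)"
      unfolding id2 by (meson norm_triangle_le order_refl add_mono norm_triangle_ineq)
    hence c: "norm (\<theta> e ** \<theta> f - mat 1) < 41/400" using a b by linarith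
    have "norm (\<theta> (e*f) - mat 1) \<le> norm (\<theta> (e*f) - \<theta> e ** \<theta> f) + norm (\<theta> e ** \<theta> f - mat 1)"
      by (rule norm_diff_triangle_ineq[of _ _ "\<theta> e ** \<theta> f", simplified] | metis norm_diff_triangle_le order_refl)
    moreover have "norm (\<theta> (e*f) - \<theta> e ** \<theta> f) < 3/100" using appr[of e f] by (simp add: norm_minus_commute)
    ultimately have "norm (\<theta> (e*f) - mat 1) < 53/400" using c by linarith
    hence "cmod (mtrace (\<theta> (e*f) - mat 1)) < 53/200" using tr_le[of "\<theta> (e*f) - mat 1"] by linarith
    thus ?thesis unfolding S2 trsub by simp
  qed
  have C0: "e * f \<in> Sk \<theta> 0" if "e \<in> Sk \<theta> 0" for e f
  proof -
    define X where "X = \<theta> (e*f)"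
    have a: "norm (\<theta> e) < 1/20" using P0 that by blast
    have eef: "e * (e * f) = e * f" by (simp add: mult.assoc[symmetric] idem)
    have b: "norm (\<theta> e ** X - X) < 3/100" using appr[of e "e*f"] unfolding X_def eef .
    have "norm X \<le> norm (\<theta> e ** X) + norm (\<theta> e ** X - X)"
      by (metis norm_triangle_ineq4 norm_minus_commute diff_diff_eq2 diff_self diff_zero add.commute
          norm_diff_triangle_ineq add_diff_cancel_left' le_less order_trans norm_triangle_sub)
    moreover have "norm (\<theta> e ** X) \<le> (1/20) * norm X"
      using norm_mult_le[of "\<theta> e" X] a by (smt (verit) mult_right_mono norm_ge_zero)
    ultimately have "norm X < 2/50" using b by linarith
    hence "cmod (mtrace X) < 19/20" using tr_le[of X] by linarith
    thus ?thesis unfolding S0 X_def .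
  qed
  have disj: "x \<notin> Sk \<theta> 0" if "x \<in> Sk \<theta> 2" for x
  proof
    assume "x \<in> Sk \<theta> 0"
    hence "cmod (mtrace (\<theta> x)) < 19/20" using S0 by blast
    moreover have "cmod (mtrace (\<theta> x) - 2) < 19/20" using that S2 by blast
    moreover have "cmod (2::complex) \<le> cmod (mtrace (\<theta> x)) + cmod (mtrace (\<theta> x) - 2)"
      using norm_triangle_ineq4[of "mtrace (\<theta> x)" "mtrace (\<theta> x) - 2"] by simp
    ultimately show False by simp
  qed
  have C5: "x * y \<in> Sk \<theta> 2 \<union> Sk \<theta> 0" if "x \<in> Sk \<theta> 2 \<union> Sk \<theta> 0" "y \<in> Sk \<theta> 2 \<union> Sk \<theta> 0" for x y
    using that C2 C0[of x y] C0[of y x] by (auto simp: mult.commute)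
  have C6: "(if x * y \<in> Sk \<theta> 2 then (mat 1 :: complex^2^2) else 0)
      = (if x \<in> Sk \<theta> 2 then (mat 1 :: complex^2^2) else 0) ** (if y \<in> Sk \<theta> 2 then (mat 1 :: complex^2^2) else 0)"
    if "x \<in> Sk \<theta> 2 \<union> Sk \<theta> 0" "y \<in> Sk \<theta> 2 \<union> Sk \<theta> 0" for x y
  proof (cases "x \<in> Sk \<theta> 2 \<and> y \<in> Sk \<theta> 2")
    case True thus ?thesis using C2 by simp
  next
    case False
    hence "x \<in> Sk \<theta> 0 \<or> y \<in> Sk \<theta> 0" using that by blast
    hence "x * y \<in> Sk \<theta> 0" using C0[of x y] C0[of y x] by (auto simp: mult.commute)
    hence "x * y \<notin> Sk \<theta> 2" using disj by blast
    thus ?thesis using False by auto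
  qed
  show ?thesis
    using P2 P0 C2 C0 C5 C6 unfolding hs_eq_norm Let_def by auto
qed


end
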